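(* Let $L/K_P$ be a finite extension. There is a unique homomorphism $r:\mathbf{S}_L\to\mathbb{Q}$ such that for every $s\in\mathbf{S}_L$ and every $\alpha\in L^+$, $v_L(\alpha^s)=r(s)\cdot v_L(\alpha)$.
   Context: $P$ is a closed point of a smooth projective curve over a finite field of characteristic $p$, $K_P$ the completion of the function field at $P$, $\mathbb{C}_P$ the completion of an algebraic closure of $K_P$, $v_L=e_{L/K_P}v_P$ the normalized valuation of $L$ extended to $\mathbb{C}_P$. $L^+=L^\times/\mu_L$ ($\mu_L$ = roots of unity of $L$), and $U_L$ denotes the $1$-units of $L$, identified with a subgroup of $L^+$. The Goss plane $\mathbf{S}_L$ is the group of homomorphisms $s:L^+\to\mathbb{C}_P^\times$ for which there is $y(s)\in\mathbb{Z}_p$ with $s(u)=u^{y(s)}$ for all $u\in U_L$; one writes $\alpha^s=s(\alpha)$ and the group law on $\mathbf{S}_L$ additively. *)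

theory Defs
  imports "HOL-Computational_Algebra.Formal_Laurent_Series"
          "HOL-Computational_Algebra.Polynomial"
begin

(* K_P is modelled as F_q((t)) = 'k fls with 'k a finite field.
   The field C_P is a type 'c with a valuation v : 'c => rat (value at 0 irrelevant)
   and an embedding iota : 'k fls => 'c. *)

definition is_valuation :: "('c::field \<Rightarrow> rat) \<Rightarrow> bool" where
  "is_valuation v \<longleftrightarrow>
     (\<forall>x y. x \<noteq> 0 \<longrightarrow> y \<noteq> 0 \<longrightarrow> v (x * y) = v x + v y) \<and>
     (\<forall>x y. x \<noteq> 0 \<longrightarrow> y \<noteq> 0 \<longrightarrow> x + y \<noteq> 0 \<longrightarrow> v (x + y) \<ge> min (v x) (v y))"

definition vconv :: "('c::field \<Rightarrow> rat) \<Rightarrow> (nat \<Rightarrow> 'c) \<Rightarrow> 'c \<Rightarrow> bool" where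
  "vconv v X z \<longleftrightarrow> (\<forall>N::rat. \<exists>n0. \<forall>n\<ge>n0. X n = z \<or> v (X n - z) \<ge> N)"

definition vcauchy :: "('c::field \<Rightarrow> rat) \<Rightarrow> (nat \<Rightarrow> 'c) \<Rightarrow> bool" where
  "vcauchy v X \<longleftrightarrow> (\<forall>N::rat. \<exists>n0. \<forall>m\<ge>n0. \<forall>n\<ge>n0. X m = X n \<or> v (X m - X n) \<ge> N)"

definition vcomplete :: "('c::field \<Rightarrow> rat) \<Rightarrow> bool" where
  "vcomplete v \<longleftrightarrow> (\<forall>X. vcauchy v X \<longrightarrow> (\<exists>z. vconv v X z))"

definition alg_closed_field :: "'c::field itself \<Rightarrow> bool" where
  "alg_closed_field _ \<longleftrightarrow> (\<forall>p::'c poly. degree p > 0 \<longrightarrow> (\<exists>x. poly p x = 0))"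

definition algebraic_over :: "'c::field set \<Rightarrow> 'c \<Rightarrow> bool" where
  "algebraic_over S a \<longleftrightarrow> (\<exists>p::'c poly. p \<noteq> 0 \<and> (\<forall>i. coeff p i \<in> S) \<and> poly p a = 0)"

definition is_valued_embedding ::
    "('c::field \<Rightarrow> rat) \<Rightarrow> ('k::{field,finite} fls \<Rightarrow> 'c) \<Rightarrow> bool" where
  "is_valued_embedding v \<iota> \<longleftrightarrow>
     inj \<iota> \<and> \<iota> 1 = 1 \<and> (\<forall>a b. \<iota> (a + b) = \<iota> a + \<iota> b) \<and> (\<forall>a b. \<iota> (a * b) = \<iota> a * \<iota> b) \<and>
     (\<forall>f. f \<noteq> 0 \<longrightarrow> v (\<iota> f) = of_int (fls_subdegree f))"

definition is_C_P :: "('c::field \<Rightarrow> rat) \<Rightarrow> ('k::{field,finite} fls \<Rightarrow> 'c) \<Rightarrow> bool" where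
  "is_C_P v \<iota> \<longleftrightarrow>
     is_valuation v \<and> is_valued_embedding v \<iota> \<and> vcomplete v \<and> alg_closed_field TYPE('c) \<and>
     (\<forall>x (N::rat). \<exists>a. algebraic_over (range \<iota>) a \<and> (x = a \<or> v (x - a) \<ge> N))"

definition finite_ext :: "('k::{field,finite} fls \<Rightarrow> 'c::field) \<Rightarrow> 'c set \<Rightarrow> bool" where
  "finite_ext \<iota> L \<longleftrightarrow>
     range \<iota> \<subseteq> L \<and>
     (\<forall>x\<in>L. \<forall>y\<in>L. x + y \<in> L \<and> x * y \<in> L) \<and> (\<forall>x\<in>L. - x \<in> L \<and> inverse x \<in> L) \<and>
     (\<exists>B. finite B \<and> B \<subseteq> L \<and> (\<forall>x\<in>L. \<exists>c. x = (\<Sum>b\<in>B. \<iota> (c b) * b)))"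

definition ram_index :: "('c::field \<Rightarrow> rat) \<Rightarrow> 'c set \<Rightarrow> nat" where
  "ram_index v L = (THE e::nat. e > 0 \<and> v ` (L - {0}) = {of_int k / of_nat e | k. True})"

definition vL :: "('c::field \<Rightarrow> rat) \<Rightarrow> 'c set \<Rightarrow> 'c \<Rightarrow> rat" where
  "vL v L x = of_nat (ram_index v L) * v x"

definition roots_of_unity :: "'c::field set \<Rightarrow> 'c set" where
  "roots_of_unity L = {x\<in>L. \<exists>n>0. x ^ n = 1}"

definition one_units :: "('c::field \<Rightarrow> rat) \<Rightarrow> 'c set \<Rightarrow> 'c set" where
  "one_units v L = {x\<in>L. x = 1 \<or> v (x - 1) > 0}"

definition padic_int :: "nat \<Rightarrow> (nat \<Rightarrow> int) \<Rightarrow> bool" where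
  "padic_int p y \<longleftrightarrow> (\<forall>n. 0 \<le> y n \<and> y n < int p ^ n) \<and> (\<forall>n. y (Suc n) mod int p ^ n = y n)"

definition padic_pow :: "('c::field \<Rightarrow> rat) \<Rightarrow> 'c \<Rightarrow> (nat \<Rightarrow> int) \<Rightarrow> 'c \<Rightarrow> bool" where
  "padic_pow v u y z \<longleftrightarrow> vconv v (\<lambda>n. u ^ nat (y n)) z"

(* Homomorphisms L^+ = L^x/mu_L -> C_P^x are
   represented as functions 'c => 'c that are multiplicative on L^x, trivial on mu_L,
   and (for extensionality) equal to 1 off L^x. *)
definition goss_plane :: "nat \<Rightarrow> ('c::field \<Rightarrow> rat) \<Rightarrow> 'c set \<Rightarrow> ('c \<Rightarrow> 'c) set" where
  "goss_plane p v L = {s.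
     (\<forall>x. x \<notin> L - {0} \<longrightarrow> s x = 1) \<and>
     (\<forall>x\<in>L - {0}. s x \<noteq> 0) \<and>
     (\<forall>x\<in>L - {0}. \<forall>y\<in>L - {0}. s (x * y) = s x * s y) \<and>
     (\<forall>\<zeta>\<in>roots_of_unity L. s \<zeta> = 1) \<and>
     (\<exists>y. padic_int p y \<and> (\<forall>u\<in>one_units v L. padic_pow v u y (s u)))}"

definition goss_add :: "('c::field \<Rightarrow> 'c) \<Rightarrow> ('c \<Rightarrow> 'c) \<Rightarrow> 'c \<Rightarrow> 'c" where
  "goss_add s t = (\<lambda>x. s x * t x)"

end

theory Submission
  imports Defs
begin
locale cpset =
  fixes v :: "'c::field \<Rightarrow> rat" and \<iota> :: "'k::{field,finite} fls \<Rightarrow> 'c" and L :: "'c set"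
  assumes cp: "is_C_P v \<iota>" and fe: "finite_ext \<iota> L"
begin

lemma isv: "is_valuation v" using cp by (simp add: is_C_P_def)
lemma emb: "is_valued_embedding v \<iota>" using cp by (simp add: is_C_P_def)

lemma vmult: "x \<noteq> 0 \<Longrightarrow> y \<noteq> 0 \<Longrightarrow> v (x * y) = v x + v y"
  using isv by (simp add: is_valuation_def)
lemma vultra: "x \<noteq> 0 \<Longrightarrow> y \<noteq> 0 \<Longrightarrow> x + y \<noteq> 0 \<Longrightarrow> v (x + y) \<ge> min (v x) (v y)"
  using isv by (simp add: is_valuation_def)
lemma v1: "v 1 = 0" using vmult[of 1 1] by simp
lemma vm1: "v (-1) = 0"
  using vmult[of "-1" "-1"] v1 by simp
lemma vneg: "x \<noteq> 0 \<Longrightarrow> v (- x) = v x"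
  using vmult[of "-1" x] vm1 by simp
lemma vinv: "x \<noteq> 0 \<Longrightarrow> v (inverse x) = - v x"
  using vmult[of x "inverse x"] v1 by simp
lemma vdiv: "x \<noteq> 0 \<Longrightarrow> y \<noteq> 0 \<Longrightarrow> v (x / y) = v x - v y"
  by (simp add: divide_inverse vmult vinv)
lemma vpow: "x \<noteq> 0 \<Longrightarrow> v (x ^ n) = of_nat n * v x"
  by (induction n) (auto simp: v1 vmult algebra_simps)

lemma vdist: assumes "a \<noteq> 0" "b \<noteq> 0" "v a \<noteq> v b"
  shows "a + b \<noteq> 0 \<and> v (a + b) = min (v a) (v b)"
proof -
  have ne: "a + b \<noteq> 0"
  proof
    assume "a + b = 0" then have "b = - a" by (metis neg_eq_iff_add_eq_0)
    with assms vneg show False by simp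
  qed
  have ge: "v (a + b) \<ge> min (v a) (v b)" using vultra assms ne by blast
  have "v (a + b) \<le> min (v a) (v b)"
  proof (cases "v a < v b")
    case True
    have "v a = v ((a + b) + (- b))" by simp
    also have "\<dots> \<ge> min (v (a+b)) (v (-b))" using vultra[of "a+b" "-b"] ne assms by simp
    finally show ?thesis using True vneg[of b] assms by (auto simp: min_def split: if_splits)
  next
    case False
    then have lt: "v b < v a" using assms by simp
    have "v b = v ((a + b) + (- a))" by simp
    also have "\<dots> \<ge> min (v (a+b)) (v (-a))" using vultra[of "a+b" "-a"] ne assms by simp
    finally show ?thesis using lt vneg[of a] assms by (auto simp: min_def split: if_splits)
  qed
  with ge ne show ?thesis by simp
qed

lemma vsum_ge: assumes "finite S" "\<And>x. x \<in> S \<Longrightarrow> f x = 0 \<or> v (f x) \<ge> a"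
  shows "sum f S = 0 \<or> v (sum f S) \<ge> a"
  using assms
proof (induction S rule: finite_induct)
  case empty then show ?case by simp
next
  case (insert x F)
  then have h1: "f x = 0 \<or> v (f x) \<ge> a" and h2: "sum f F = 0 \<or> v (sum f F) \<ge> a" by auto
  have "f x + sum f F = 0 \<or> v (f x + sum f F) \<ge> a"
  proof (cases "f x = 0 \<or> sum f F = 0 \<or> f x + sum f F = 0")
    case True then show ?thesis using h1 h2 by auto
  next
    case False
    then have "v (f x + sum f F) \<ge> min (v (f x)) (v (sum f F))" using vultra by blast
    then show ?thesis using h1 h2 False by linarith
  qed
  then show ?case using insert by simp
qed

lemma vsum_distinct: assumes "finite t" "t \<noteq> {}" "\<And>x. x \<in> t \<Longrightarrow> f x \<noteq> 0" "inj_on (\<lambda>x. v (f x)) t"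
  shows "sum f t \<noteq> 0"
proof -
  have "sum f t \<noteq> 0 \<and> (\<exists>x\<in>t. v (sum f t) = v (f x))" using assms
  proof (induction t rule: finite_ne_induct)
    case (singleton x) then show ?case by simp
  next
    case (insert y F)
    then obtain x0 where x0: "x0 \<in> F" "v (sum f F) = v (f x0)" and nz: "sum f F \<noteq> 0"
      by (auto simp: inj_on_def)
    have "y \<noteq> x0" using insert x0 by auto
    have "inj_on (\<lambda>x. v (f x)) (insert y F)" using insert.prems by blast
    then have "v (f y) \<noteq> v (f x0)" using \<open>y \<noteq> x0\<close> x0(1) by (auto simp: inj_on_def)
    then have "v (f y) \<noteq> v (sum f F)" using x0 by simp
    then have "f y + sum f F \<noteq> 0 \<and> v (f y + sum f F) = min (v (f y)) (v (sum f F))"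
      using vdist insert nz by simp
    then show ?case using insert x0 by (auto simp: min_def)
  qed
  then show ?thesis by simp
qed

lemma iota_inj: "inj \<iota>" using emb by (simp add: is_valued_embedding_def)
lemma iota_1: "\<iota> 1 = 1" using emb by (simp add: is_valued_embedding_def)
lemma iota_add: "\<iota> (a + b) = \<iota> a + \<iota> b" using emb by (simp add: is_valued_embedding_def)
lemma iota_mult: "\<iota> (a * b) = \<iota> a * \<iota> b" using emb by (simp add: is_valued_embedding_def)
lemma iota_v: "f \<noteq> 0 \<Longrightarrow> v (\<iota> f) = of_int (fls_subdegree f)"
  using emb by (simp add: is_valued_embedding_def)
lemma iota_0: "\<iota> 0 = 0" using iota_add[of 0 0] by (metis add.right_neutral add_left_cancel)
lemma iota_neg: "\<iota> (- a) = - \<iota> a"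
proof -
  have "\<iota> a + \<iota> (-a) = 0" using iota_add[of a "-a"] iota_0 by simp
  then show ?thesis by (metis neg_eq_iff_add_eq_0)
qed
lemma iota_diff: "\<iota> (a - b) = \<iota> a - \<iota> b" using iota_add[of a "-b"] iota_neg by simp
lemma iota_nz: "a \<noteq> 0 \<Longrightarrow> \<iota> a \<noteq> 0" using iota_inj iota_0 by (metis injD)
lemma iota_sum: "\<iota> (sum f S) = sum (\<lambda>x. \<iota> (f x)) S"
  by (induction S rule: infinite_finite_induct) (auto simp: iota_0 iota_add)

lemma L_iota: "\<iota> a \<in> L" using fe by (auto simp: finite_ext_def)
lemma L_add: "x \<in> L \<Longrightarrow> y \<in> L \<Longrightarrow> x + y \<in> L" using fe by (auto simp: finite_ext_def)
lemma L_mult: "x \<in> L \<Longrightarrow> y \<in> L \<Longrightarrow> x * y \<in> L" using fe by (auto simp: finite_ext_def)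
lemma L_neg: "x \<in> L \<Longrightarrow> - x \<in> L" using fe by (auto simp: finite_ext_def)
lemma L_inv: "x \<in> L \<Longrightarrow> inverse x \<in> L" using fe by (auto simp: finite_ext_def)
lemma L_1: "1 \<in> L" using L_iota[of 1] iota_1 by simp
lemma L_0: "0 \<in> L" using L_iota[of 0] iota_0 by simp
lemma L_diff: "x \<in> L \<Longrightarrow> y \<in> L \<Longrightarrow> x - y \<in> L" using L_add L_neg by (metis diff_conv_add_uminus)
lemma L_pow: "x \<in> L \<Longrightarrow> x ^ n \<in> L" by (induction n) (auto simp: L_1 L_mult)
lemma L_sum: "(\<And>x. x \<in> S \<Longrightarrow> f x \<in> L) \<Longrightarrow> sum f S \<in> L"
  by (induction S rule: infinite_finite_induct) (auto simp: L_0 L_add)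

end

context cpset begin
lemma vs: "vector_space (\<lambda>c x. \<iota> c * x)"
  by unfold_locales (simp_all add: iota_add iota_mult iota_1 distrib_left distrib_right mult.assoc)
lemma md: "module (\<lambda>c x. \<iota> c * x)"
  using vs module_iff_vector_space by blast
lemma fe_basis: "\<exists>B. finite B \<and> B \<subseteq> L \<and> (\<forall>x\<in>L. \<exists>c. x = (\<Sum>b\<in>B. \<iota> (c b) * b))"
  using fe unfolding finite_ext_def by (elim conjE) assumption
end

context cpset begin
end

context cpset begin

lemma dep_explicit: "module.dependent (\<lambda>c x. \<iota> c * x) X \<longleftrightarrow>
  (\<exists>t u. finite t \<and> t \<subseteq> X \<and> (\<Sum>x\<in>t. \<iota> (u x) * x) = 0 \<and> (\<exists>x\<in>t. u x \<noteq> 0))"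
  using module.dependent_explicit[OF md] by simp

definition nB where "nB = card (SOME B. finite B \<and> B \<subseteq> L \<and> (\<forall>x\<in>L. \<exists>c. x = (\<Sum>b\<in>B. \<iota> (c b) * b)))"

lemma bound2: assumes "X \<subseteq> L" "\<not> module.dependent (\<lambda>c x. \<iota> c * x) X"
  shows "finite X \<and> card X \<le> nB"
proof -
  define B where "B = (SOME B. finite B \<and> B \<subseteq> L \<and> (\<forall>x\<in>L. \<exists>c. x = (\<Sum>b\<in>B. \<iota> (c b) * b)))"
  have B0: "finite B \<and> B \<subseteq> L \<and> (\<forall>x\<in>L. \<exists>c. x = (\<Sum>b\<in>B. \<iota> (c b) * b))"
    unfolding B_def by (rule someI_ex[OF fe_basis])
  have B1: "finite B" using B0 by (elim conjE)
  have B3: "\<forall>x\<in>L. \<exists>c. x = (\<Sum>b\<in>B. \<iota> (c b) * b)" using B0 by (elim conjE)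
  have sp: "module.span (\<lambda>c x. \<iota> c * x) B = range (\<lambda>u. \<Sum>b\<in>B. \<iota> (u b) * b)"
    using module.span_finite[OF md B1] by simp
  have "X \<subseteq> module.span (\<lambda>c x. \<iota> c * x) B"
  proof
    fix x assume "x \<in> X"
    then have xL: "x \<in> L" using assms(1) by (simp add: subset_iff)
    obtain c where c: "x = (\<Sum>b\<in>B. \<iota> (c b) * b)" using bspec[OF B3 xL] by (rule exE)
    show "x \<in> module.span (\<lambda>c x. \<iota> c * x) B" unfolding sp
      by (rule image_eqI[where x=c]) (simp_all add: c)
  qed
  then have "finite X \<and> card X \<le> card B"
    by (rule vector_space.independent_span_bound[OF vs B1 assms(2)])
  then show ?thesis unfolding nB_def B_def[symmetric] .
qed

lemma iota_X: "\<iota> fls_X \<in> L" "\<iota> fls_X \<noteq> 0" "v (\<iota> fls_X) = 1"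
  using L_iota iota_nz[of fls_X] iota_v[of fls_X] by simp_all

lemma indep_distinct_vals:
  assumes "X \<subseteq> L" "0 \<notin> X" "\<And>x y. x \<in> X \<Longrightarrow> y \<in> X \<Longrightarrow> x \<noteq> y \<Longrightarrow> v x - v y \<notin> \<int>"
  shows "\<not> module.dependent (\<lambda>c x. \<iota> c * x) X"
proof
  assume "module.dependent (\<lambda>c x. \<iota> c * x) X"
  then obtain t u where t: "finite t" "t \<subseteq> X" "(\<Sum>x\<in>t. \<iota> (u x) * x) = 0" and x0: "\<exists>x\<in>t. u x \<noteq> 0"
    unfolding dep_explicit by (elim exE conjE) (rule that)
  define t' where "t' = {x\<in>t. u x \<noteq> 0}"
  have ft': "finite t'" using t(1) by (simp add: t'_def)
  have ne: "t' \<noteq> {}" using x0 by (auto simp: t'_def)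
  have "(\<Sum>x\<in>t'. \<iota> (u x) * x) = (\<Sum>x\<in>t. if u x \<noteq> 0 then \<iota> (u x) * x else 0)"
    unfolding t'_def using t(1) by (rule sum.inter_filter)
  also have "\<dots> = (\<Sum>x\<in>t. \<iota> (u x) * x)"
    by (rule sum.cong) (auto simp: iota_0)
  finally have s0: "(\<Sum>x\<in>t'. \<iota> (u x) * x) = 0" using t(3) by simp
  have nz: "\<iota> (u x) * x \<noteq> 0" if "x \<in> t'" for x
  proof -
    have "x \<in> X" "u x \<noteq> 0" using that t(2) by (auto simp: t'_def)
    then show ?thesis using assms(2) iota_nz by auto
  qed
  have vv: "v (\<iota> (u x) * x) = of_int (fls_subdegree (u x)) + v x" if "x \<in> t'" for x
  proof -
    have "x \<in> X" "u x \<noteq> 0" using that t(2) by (auto simp: t'_def)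
    then have "x \<noteq> 0" using assms(2) by auto
    then show ?thesis using vmult[OF iota_nz[OF \<open>u x \<noteq> 0\<close>] \<open>x \<noteq> 0\<close>] iota_v[OF \<open>u x \<noteq> 0\<close>] by simp
  qed
  have "inj_on (\<lambda>x. v (\<iota> (u x) * x)) t'"
  proof (rule inj_onI)
    fix x y assume xy: "x \<in> t'" "y \<in> t'" "v (\<iota> (u x) * x) = v (\<iota> (u y) * y)"
    show "x = y"
    proof (rule ccontr)
      assume "x \<noteq> y"
      have "x \<in> X" "y \<in> X" using xy t(2) by (auto simp: t'_def)
      then have "v x - v y \<notin> \<int>" using assms(3) \<open>x \<noteq> y\<close> by simp
      moreover have "v x - v y = of_int (fls_subdegree (u y) - fls_subdegree (u x))"
        using xy vv by simp
      ultimately show False by simp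
    qed
  qed
  then have "(\<Sum>x\<in>t'. \<iota> (u x) * x) \<noteq> 0" using vsum_distinct[OF ft' ne nz] by simp
  with s0 show False by simp
qed

lemma denom:
  assumes "\<alpha> \<in> L" "\<alpha> \<noteq> 0"
  shows "\<exists>j::nat. 1 \<le> j \<and> j \<le> nB \<and> of_nat j * v \<alpha> \<in> \<int>"
proof (rule ccontr)
  assume H: "\<not> ?thesis"
  define g where "g = v \<alpha>"
  have Hj: "of_nat j * g \<notin> \<int>" if "1 \<le> j" "j \<le> nB" for j::nat
  proof
    assume "of_nat j * g \<in> \<int>"
    then have "1 \<le> j \<and> j \<le> nB \<and> of_nat j * v \<alpha> \<in> \<int>" using that unfolding g_def by simp
    then have "\<exists>j::nat. 1 \<le> j \<and> j \<le> nB \<and> of_nat j * v \<alpha> \<in> \<int>" by (rule exI)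
    with H show False by (rule notE)
  qed
  have vp: "v (\<alpha> ^ i) = of_nat i * g" for i using vpow[OF assms(2)] g_def by simp
  have dif: "v (\<alpha> ^ i) - v (\<alpha> ^ k) \<notin> \<int>" if "i \<le> nB" "k \<le> nB" "i \<noteq> k" for i k
  proof (cases "k < i")
    case True
    have "v (\<alpha> ^ i) - v (\<alpha> ^ k) = of_nat (i - k) * g" using True by (simp add: vp of_nat_diff algebra_simps)
    then show ?thesis using Hj[of "i - k"] True that by simp
  next
    case False
    then have ki: "i < k" using that by simp
    have "v (\<alpha> ^ i) - v (\<alpha> ^ k) = - (of_nat (k - i) * g)" using ki by (simp add: vp of_nat_diff algebra_simps)
    moreover have "of_nat (k - i) * g \<notin> \<int>" using Hj[of "k - i"] ki that by simp
    ultimately show ?thesis by simp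
  qed
  define X where "X = (\<lambda>i. \<alpha> ^ i) ` {0..nB}"
  have inj: "inj_on (\<lambda>i. \<alpha> ^ i) {0..nB}"
  proof (rule inj_onI)
    fix i k assume "i \<in> {0..nB}" "k \<in> {0..nB}" "\<alpha> ^ i = \<alpha> ^ k"
    then show "i = k" using dif[of i k] by auto
  qed
  have cX: "card X = nB + 1" unfolding X_def using card_image[OF inj] by simp
  have XL: "X \<subseteq> L" unfolding X_def using L_pow assms(1) by auto
  have X0: "0 \<notin> X" unfolding X_def using assms(2) by auto
  have "\<not> module.dependent (\<lambda>c x. \<iota> c * x) X"
  proof (rule indep_distinct_vals[OF XL X0])
    fix x y assume "x \<in> X" "y \<in> X" "x \<noteq> y"
    then obtain i k where ik: "i \<le> nB" "k \<le> nB" "x = \<alpha> ^ i" "y = \<alpha> ^ k" unfolding X_def by auto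
    then have "i \<noteq> k" using \<open>x \<noteq> y\<close> by auto
    then show "v x - v y \<notin> \<int>" using dif[of i k] ik by simp
  qed
  from bound2[OF XL this] have "card X \<le> nB" by (elim conjE)
  with cX show False by simp
qed

definition G where "G = v ` (L - {0})"

lemma G_1: "1 \<in> G" unfolding G_def using iota_X by force

lemma G_intmult: assumes "g \<in> G" shows "of_int m * g \<in> G"
proof -
  obtain \<alpha> where a: "\<alpha> \<in> L" "\<alpha> \<noteq> 0" "g = v \<alpha>" using assms unfolding G_def by auto
  show ?thesis
  proof (cases "m \<ge> 0")
    case True
    have "v (\<alpha> ^ nat m) = of_int m * g" using vpow[OF a(2)] a(3) True by simp
    moreover have "\<alpha> ^ nat m \<in> L - {0}" using L_pow a by simp
    ultimately show ?thesis unfolding G_def by (metis image_eqI)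
  next
    case False
    have nz: "\<alpha> ^ nat (-m) \<noteq> 0" using a(2) by simp
    have "v (inverse (\<alpha> ^ nat (-m))) = - (of_nat (nat (-m)) * g)" using vpow[OF a(2)] vinv[OF nz] a(3) by simp
    also have "(of_nat (nat (-m)) :: rat) = of_int (-m)" using False by simp
    finally have "v (inverse (\<alpha> ^ nat (-m))) = of_int m * g" by simp
    moreover have "inverse (\<alpha> ^ nat (-m)) \<in> L - {0}" using L_pow L_inv a by simp
    ultimately show ?thesis unfolding G_def by (metis image_eqI)
  qed
qed

lemma G_add: assumes "g \<in> G" "h \<in> G" shows "g + h \<in> G"
proof -
  obtain \<alpha> where a: "\<alpha> \<in> L" "\<alpha> \<noteq> 0" "g = v \<alpha>" using assms unfolding G_def by auto
  obtain \<beta> where b: "\<beta> \<in> L" "\<beta> \<noteq> 0" "h = v \<beta>" using assms unfolding G_def by auto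
  have "v (\<alpha> * \<beta>) = g + h" using vmult a b by simp
  moreover have "\<alpha> * \<beta> \<in> L - {0}" using L_mult a b by simp
  ultimately show ?thesis unfolding G_def by (metis image_eqI)
qed

lemma G_den: assumes "g \<in> G" shows "of_nat (fact nB) * g \<in> \<int>"
proof -
  obtain \<alpha> where a: "\<alpha> \<in> L" "\<alpha> \<noteq> 0" "g = v \<alpha>" using assms unfolding G_def by auto
  obtain j::nat where j: "1 \<le> j" "j \<le> nB" "of_nat j * g \<in> \<int>" using denom[OF a(1,2)] a(3) by blast
  obtain m where m: "fact nB = j * m" using dvd_fact[OF j(1,2)] by (auto elim: dvdE)
  have "of_nat (fact nB) * g = of_nat m * (of_nat j * g)" by (simp add: m algebra_simps)
  then show ?thesis using j(3) by (metis Ints_mult Ints_of_nat)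
qed

lemma disc: "\<exists>e::nat. e > 0 \<and> G = {of_int k / of_nat e | k. True}"
proof -
  define N::nat where "N = fact nB"
  have N0: "N > 0" by (simp add: N_def)
  define M where "M = {k::nat. 0 < k \<and> of_nat k / of_nat N \<in> G}"
  have NM: "N \<in> M" using N0 G_1 by (simp add: M_def)
  define k0 where "k0 = (LEAST k. k \<in> M)"
  have k0M: "k0 \<in> M" unfolding k0_def using NM by (rule LeastI)
  then have k0p: "k0 > 0" and k0G: "of_nat k0 / of_nat N \<in> G" by (auto simp: M_def)
  have mult: "\<exists>q::int. g = of_int q * (of_nat k0 / of_nat N)" if "g \<in> G" for g
  proof -
    have "of_nat N * g \<in> \<int>" using G_den that by (simp add: N_def)
    then obtain a where a: "of_nat N * g = of_int a" by (elim Ints_cases)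
    define q where "q = a div int k0"
    define r where "r = a mod int k0"
    have ar: "a = q * int k0 + r" by (simp add: q_def r_def)
    have r0: "0 \<le> r" "r < int k0" using k0p by (simp_all add: r_def)
    have "of_int r / of_nat N = g + of_int (- q) * (of_nat k0 / of_nat N)"
      using a ar N0 by (simp add: field_simps)
    moreover have "g + of_int (- q) * (of_nat k0 / of_nat N) \<in> G"
      using G_add G_intmult k0G that by blast
    ultimately have rG: "of_int r / of_nat N \<in> G" by simp
    have "r = 0"
    proof (rule ccontr)
      assume "r \<noteq> 0"
      then have "nat r \<in> M" using rG r0 by (simp add: M_def)
      then have "k0 \<le> nat r" unfolding k0_def by (rule Least_le)
      with r0 show False by simp
    qed
    then have "g = of_int q * (of_nat k0 / of_nat N)" using a ar N0 by (simp add: field_simps)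
    then show ?thesis by blast
  qed
  obtain q0 where q0: "1 = of_int q0 * (of_nat k0 / (of_nat N :: rat))" using mult[OF G_1] by blast
  then have Nq: "of_nat N = of_int q0 * (of_nat k0 :: rat)" using N0 by (simp add: field_simps)
  have q0p: "q0 > 0"
  proof -
    have "(of_int q0 :: rat) * of_nat k0 > 0" using Nq N0 by simp
    then show ?thesis using k0p by (simp add: zero_less_mult_iff)
  qed
  have base: "of_nat k0 / (of_nat N :: rat) = 1 / of_int q0" using Nq k0p q0p by (simp add: field_simps)
  define e where "e = nat q0"
  have ee: "(of_nat e :: rat) = of_int q0" using q0p by (simp add: e_def)
  have "G = {of_int k / of_nat e | k. True}"
  proof (intro set_eqI iffI)
    fix g :: rat assume "g \<in> G"
    then obtain q where "g = of_int q * (of_nat k0 / of_nat N)" using mult by blast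
    then have "g = of_int q / of_nat e" using base ee by simp
    then show "g \<in> {of_int k / of_nat e | k. True}" by blast
  next
    fix g :: rat assume "g \<in> {of_int k / of_nat e | k. True}"
    then obtain k where "g = of_int k / of_nat e" by blast
    then have "g = of_int k * (of_nat k0 / of_nat N)" using base ee by simp
    then show "g \<in> G" using G_intmult[OF k0G] by simp
  qed
  moreover have "e > 0" using q0p by (simp add: e_def)
  ultimately show ?thesis by blast
qed

lemma ram_pos: "ram_index v L > 0"
proof -
  obtain e::nat where e0: "e > 0 \<and> G = {of_int k / of_nat e | k. True}" using disc by (rule exE)
  have e: "e > 0" "G = {of_int k / of_nat e | k. True}" using e0 by simp_all
  have dv: "a dvd b" if ab: "a > 0" "b > 0" "{of_int k / of_nat a | k. True} = {of_int k / (of_nat b :: rat) | k. True}" for a b :: nat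
  proof -
    have "(1::rat) / of_nat a \<in> {of_int k / of_nat a | k. True}"
      by (intro CollectI exI[of _ 1]) simp
    then have "(1::rat) / of_nat a \<in> {of_int k / of_nat b | k. True}" using ab(3) by (simp only:)
    then obtain k where "(1::rat) / of_nat a = of_int k / of_nat b" by auto
    then have "(of_nat b :: rat) = of_int k * of_nat a" using ab by (simp add: field_simps)
    then have "of_int (int b) = (of_int (k * int a) :: rat)" by simp
    then have "int b = k * int a" by (simp only: of_int_eq_iff)
    then have "int a dvd int b" unfolding dvd_def by (intro exI[of _ k]) (simp add: mult.commute)
    then show ?thesis by (simp only: int_dvd_int_iff)
  qed
  have uniq: "e' = e" if "e' > 0" "G = {of_int k / of_nat e' | k. True}" for e'::nat
  proof -
    have "e dvd e'" using dv[of e e'] e that by simp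
    moreover have "e' dvd e" using dv[of e' e] e that by simp
    ultimately show ?thesis by (simp add: dvd_antisym)
  qed
  have "ram_index v L = e" unfolding ram_index_def
  proof (rule the_equality)
    show "0 < e \<and> v ` (L - {0}) = {of_int k / of_nat e | k. True}" using e by (simp add: G_def)
  next
    fix e' assume "0 < e' \<and> v ` (L - {0}) = {of_int k / of_nat e' | k. True}"
    then show "e' = e" using uniq by (simp add: G_def)
  qed
  with e show ?thesis by simp
qed

end

context cpset begin

definition rc :: "'c \<Rightarrow> bool" where "rc z \<longleftrightarrow> z = 0 \<or> v z > 0"

lemma rc_0: "rc 0" by (simp add: rc_def)
lemma rc_add: assumes "rc a" "rc b" shows "rc (a + b)"
proof (cases "a = 0 \<or> b = 0 \<or> a + b = 0")
  case True then show ?thesis using assms by (auto simp: rc_def)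
next
  case False
  then have "v (a + b) \<ge> min (v a) (v b)" using vultra by blast
  then show ?thesis using assms False unfolding rc_def by linarith
qed
lemma rc_neg: "rc a \<Longrightarrow> rc (- a)" unfolding rc_def using vneg by (cases "a = 0") auto
lemma rc_sum: "(\<And>x. x \<in> S \<Longrightarrow> rc (f x)) \<Longrightarrow> rc (sum f S)"
  by (induction S rule: infinite_finite_induct) (auto simp: rc_0 rc_add)
lemma rc_mult: assumes "rc a" "b = 0 \<or> v b \<ge> 0" shows "rc (b * a)"
proof (cases "a = 0 \<or> b = 0")
  case True then show ?thesis by (auto simp: rc_def)
next
  case False
  then have "v (b * a) = v b + v a" using vmult by simp
  then show ?thesis using assms False unfolding rc_def by auto
qed

lemma v_const: "c \<noteq> 0 \<Longrightarrow> v (\<iota> (fls_const c)) = 0"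
  using iota_v[of "fls_const c"] by simp

definition rind :: "'c set \<Rightarrow> bool" where
  "rind E \<longleftrightarrow> E \<subseteq> L \<and> (\<forall>x\<in>E. x \<noteq> 0 \<and> v x = 0) \<and>
     (\<forall>t (d::'c \<Rightarrow> 'k). t \<subseteq> E \<longrightarrow> finite t \<longrightarrow> rc (\<Sum>x\<in>t. \<iota> (fls_const (d x)) * x) \<longrightarrow> (\<forall>x\<in>t. d x = 0))"

lemma rind_empty: "rind {}" by (simp add: rind_def)

lemma rind_indep: assumes "rind E" shows "\<not> module.dependent (\<lambda>c x. \<iota> c * x) E"
proof
  assume "module.dependent (\<lambda>c x. \<iota> c * x) E"
  then obtain t u where t: "finite t" "t \<subseteq> E" "(\<Sum>x\<in>t. \<iota> (u x) * x) = 0" and x0: "\<exists>x\<in>t. u x \<noteq> 0"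
    unfolding dep_explicit by (elim exE conjE) (rule that)
  have E0: "x \<noteq> 0" "v x = 0" if "x \<in> t" for x using assms that t(2) unfolding rind_def by auto
  define t' where "t' = {x\<in>t. u x \<noteq> 0}"
  have ft': "finite t'" using t(1) by (simp add: t'_def)
  have ne: "t' \<noteq> {}" using x0 by (auto simp: t'_def)
  define m where "m = Min ((\<lambda>x. fls_subdegree (u x)) ` t')"
  have "m \<in> (\<lambda>x. fls_subdegree (u x)) ` t'" unfolding m_def using ft' ne by (intro Min_in) auto
  then obtain x1 where x1: "x1 \<in> t'" "fls_subdegree (u x1) = m" by auto
  have mle: "m \<le> fls_subdegree (u x)" if "x \<in> t'" for x
    unfolding m_def using ft' that by (intro Min_le) auto
  define p where "p = (fls_X_intpow (-m) :: 'k fls)"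
  have pnz: "p \<noteq> 0" unfolding p_def by (rule fls_X_intpow_nonzero)
  have psub: "fls_subdegree p = - m" unfolding p_def by (rule fls_subdegree_fls_X_intpow)
  define c where "c x = u x * p" for x
  have Sc: "(\<Sum>x\<in>t. \<iota> (c x) * x) = 0"
  proof -
    have "(\<Sum>x\<in>t. \<iota> (c x) * x) = \<iota> p * (\<Sum>x\<in>t. \<iota> (u x) * x)"
      by (simp add: c_def iota_mult sum_distrib_left mult_ac)
    then show ?thesis using t(3) by simp
  qed
  have csub: "c x \<noteq> 0 \<and> fls_subdegree (c x) = fls_subdegree (u x) - m" if ux: "u x \<noteq> 0" for x
  proof -
    have cnz: "c x \<noteq> 0" using ux pnz by (simp add: c_def)
    have "v (\<iota> (c x)) = v (\<iota> (u x)) + v (\<iota> p)"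
      unfolding c_def iota_mult by (rule vmult[OF iota_nz[OF ux] iota_nz[OF pnz]])
    then have "of_int (fls_subdegree (c x)) = (of_int (fls_subdegree (u x) - m) :: rat)"
      using iota_v[OF cnz] iota_v[OF ux] iota_v[OF pnz] psub by simp
    then have "fls_subdegree (c x) = fls_subdegree (u x) - m" by (simp only: of_int_eq_iff)
    with cnz show ?thesis by simp
  qed
  define d where "d x = fls_nth (c x) 0" for x
  define w where "w x = c x - fls_const (d x)" for x
  have rcw: "rc (\<iota> (w x) * x)" if xt: "x \<in> t" for x
  proof (cases "u x = 0")
    case True
    then show ?thesis by (simp add: w_def d_def c_def iota_0 rc_0)
  next
    case uxnz: False
    then have xt': "x \<in> t'" using xt by (simp add: t'_def)
    have sc: "fls_subdegree (c x) \<ge> 0" using csub[OF uxnz] mle[OF xt'] by simp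
    show ?thesis
    proof (cases "w x = 0")
      case True then show ?thesis by (simp add: iota_0 rc_0)
    next
      case wnz: False
      have "1 \<le> fls_subdegree (w x)"
      proof (rule fls_subdegree_geI[OF wnz])
        fix k :: int assume k1: "k < 1"
        show "fls_nth (w x) k = 0"
        proof (cases "k = 0")
          case True then show ?thesis by (simp add: w_def d_def)
        next
          case knz: False
          then have "k < fls_subdegree (c x)" using k1 sc by simp
          then show ?thesis using knz by (simp add: w_def)
        qed
      qed
      moreover have "v (\<iota> (w x) * x) = of_int (fls_subdegree (w x)) + v x"
        using vmult[OF iota_nz[OF wnz] E0(1)[OF xt]] iota_v[OF wnz] by simp
      ultimately show ?thesis using E0(2)[OF xt] unfolding rc_def by simp
    qed
  qed
  have "(\<Sum>x\<in>t. \<iota> (fls_const (d x)) * x) = (\<Sum>x\<in>t. \<iota> (c x) * x) - (\<Sum>x\<in>t. \<iota> (w x) * x)"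
    by (simp add: w_def iota_diff left_diff_distrib sum_subtractf)
  also have "\<dots> = - (\<Sum>x\<in>t. \<iota> (w x) * x)" using Sc by simp
  finally have "rc (\<Sum>x\<in>t. \<iota> (fls_const (d x)) * x)" using rc_neg[OF rc_sum[OF rcw]] by simp
  then have "\<forall>x\<in>t. d x = 0" using assms t(1,2) unfolding rind_def by blast
  moreover have "x1 \<in> t" "u x1 \<noteq> 0" using x1(1) by (auto simp: t'_def)
  moreover have "d x1 \<noteq> 0"
  proof -
    have "c x1 \<noteq> 0" "fls_subdegree (c x1) = 0" using csub[OF \<open>u x1 \<noteq> 0\<close>] x1(2) by auto
    then show ?thesis unfolding d_def using nth_fls_subdegree_nonzero[of "c x1"] by simp
  qed
  ultimately show False by blast
qed

lemma rind_bound: assumes "rind E" shows "finite E \<and> card E \<le> nB"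
proof -
  have "E \<subseteq> L" using assms unfolding rind_def by simp
  then show ?thesis by (rule bound2) (rule rind_indep[OF assms])
qed

lemma max_rind: "\<exists>E. rind E \<and> (\<forall>E'. rind E' \<longrightarrow> card E' \<le> card E)"
proof -
  define C where "C = card ` {E. rind E}"
  have fC: "finite C" unfolding C_def
    by (rule finite_subset[of _ "{..nB}"]) (auto dest: rind_bound)
  have "card {} \<in> C" unfolding C_def by (rule image_eqI[where x="{}"]) (simp_all add: rind_empty)
  then have "C \<noteq> {}" by blast
  then have "Max C \<in> C" using fC by (rule Max_in[rotated])
  then obtain E where E: "rind E" "card E = Max C" unfolding C_def by auto
  have "card E' \<le> card E" if "rind E'" for E'
    unfolding E(2) using fC that by (intro Max_ge) (auto simp: C_def)
  then show ?thesis using E(1) by blast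
qed

end

context cpset begin

lemma covered:
  assumes E: "rind E" "\<forall>E'. rind E' \<longrightarrow> card E' \<le> card E"
    and x: "x \<in> L" "x \<noteq> 0" "v x = 0"
  shows "\<exists>d::'c \<Rightarrow> 'k. rc (x - (\<Sum>e\<in>E. \<iota> (fls_const (d e)) * e))"
proof -
  have fE: "finite E" using rind_bound[OF E(1)] by simp
  show ?thesis
  proof (cases "x \<in> E")
    case True
    define d :: "'c \<Rightarrow> 'k" where "d e = (if e = x then 1 else 0)" for e
    have "(\<Sum>e\<in>E. \<iota> (fls_const (d e)) * e) = (\<Sum>e\<in>E. if e = x then e else 0)"
      by (rule sum.cong) (simp_all add: d_def iota_1 iota_0)
    also have "\<dots> = x" using True fE by simp
    finally have "rc (x - (\<Sum>e\<in>E. \<iota> (fls_const (d e)) * e))" by (simp add: rc_0)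
    then show ?thesis by (rule exI[of _ d])
  next
    case xE: False
    define E' where "E' = insert x E"
    have fE': "finite E'" using fE by (simp add: E'_def)
    have "card E' = card E + 1" using fE xE by (simp add: E'_def)
    then have "\<not> rind E'" using E(2) by fastforce
    moreover have "E' \<subseteq> L" "\<forall>y\<in>E'. y \<noteq> 0 \<and> v y = 0" using E(1) x unfolding E'_def rind_def by auto
    ultimately obtain t and d :: "'c \<Rightarrow> 'k" where td: "t \<subseteq> E'" "finite t"
      "rc (\<Sum>y\<in>t. \<iota> (fls_const (d y)) * y)" and y0: "\<exists>y\<in>t. d y \<noteq> 0"
      unfolding rind_def by auto
    define d' where "d' y = (if y \<in> t then d y else 0)" for y
    have "(\<Sum>y\<in>E'. \<iota> (fls_const (d' y)) * y) = (\<Sum>y\<in>t. \<iota> (fls_const (d' y)) * y)"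
      by (rule sum.mono_neutral_right[OF fE' td(1)]) (simp add: d'_def iota_0)
    also have "\<dots> = (\<Sum>y\<in>t. \<iota> (fls_const (d y)) * y)"
      by (rule sum.cong) (simp_all add: d'_def)
    finally have S': "rc (\<Sum>y\<in>E'. \<iota> (fls_const (d' y)) * y)" using td(3) by simp
    have split: "(\<Sum>y\<in>E'. \<iota> (fls_const (d' y)) * y) = \<iota> (fls_const (d' x)) * x + (\<Sum>e\<in>E. \<iota> (fls_const (d' e)) * e)"
      unfolding E'_def using fE xE by simp
    have ax: "d' x \<noteq> 0"
    proof
      assume ax0: "d' x = 0"
      then have "rc (\<Sum>e\<in>E. \<iota> (fls_const (d' e)) * e)" using S' split by (simp add: iota_0)
      then have all0: "\<forall>e\<in>E. d' e = 0" using E(1) fE unfolding rind_def by blast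
      obtain y where y: "y \<in> t" "d y \<noteq> 0" using y0 by blast
      then have "d' y \<noteq> 0" by (simp add: d'_def)
      moreover have "y \<in> E'" using y td(1) by blast
      ultimately show False using all0 ax0 unfolding E'_def by auto
    qed
    define a where "a = d' x"
    define d'' where "d'' e = - (inverse a * d' e)" for e
    have va: "v (\<iota> (fls_const (inverse a))) = 0" using ax v_const by (simp add: a_def)
    have "rc (\<iota> (fls_const (inverse a)) * (\<Sum>y\<in>E'. \<iota> (fls_const (d' y)) * y))"
      using rc_mult[OF S'] va by simp
    moreover have "\<iota> (fls_const (inverse a)) * (\<Sum>y\<in>E'. \<iota> (fls_const (d' y)) * y)
        = x - (\<Sum>e\<in>E. \<iota> (fls_const (d'' e)) * e)"
    proof -
      have 1: "\<iota> (fls_const (inverse a)) * (\<iota> (fls_const (d' x)) * x) = x"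
        using ax by (simp add: a_def mult.assoc[symmetric] iota_mult[symmetric] iota_1)
      have 2: "\<iota> (fls_const (inverse a)) * (\<Sum>e\<in>E. \<iota> (fls_const (d' e)) * e)
          = - (\<Sum>e\<in>E. \<iota> (fls_const (d'' e)) * e)"
        by (simp add: sum_distrib_left d''_def iota_neg iota_mult[symmetric] mult.assoc[symmetric] sum_negf)
      show ?thesis unfolding split distrib_left 1 2 by simp
    qed
    ultimately show ?thesis by (intro exI[of _ d'']) simp
  qed
qed

lemma finite_reps: "\<exists>R. finite R \<and> (\<forall>x. x \<in> L \<longrightarrow> x \<noteq> 0 \<longrightarrow> v x = 0 \<longrightarrow> (\<exists>\<rho>\<in>R. rc (x - \<rho>)))"
proof -
  obtain E where E: "rind E" "\<forall>E'. rind E' \<longrightarrow> card E' \<le> card E" using max_rind by blast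
  have fE: "finite E" using rind_bound[OF E(1)] by simp
  define R where "R = (\<lambda>d. \<Sum>e\<in>E. \<iota> (fls_const (d e)) * e) ` (PiE E (\<lambda>_. (UNIV :: 'k set)))"
  have "finite R" unfolding R_def using fE by (intro finite_imageI finite_PiE) auto
  moreover have "\<exists>\<rho>\<in>R. rc (x - \<rho>)" if xh: "x \<in> L" "x \<noteq> 0" "v x = 0" for x
  proof -
    obtain d :: "'c \<Rightarrow> 'k" where d: "rc (x - (\<Sum>e\<in>E. \<iota> (fls_const (d e)) * e))"
      using covered[OF E xh] by (rule exE)
    have "(\<Sum>e\<in>E. \<iota> (fls_const (d e)) * e) = (\<Sum>e\<in>E. \<iota> (fls_const (restrict d E e)) * e)"
      by (rule sum.cong) simp_all
    moreover have "(\<Sum>e\<in>E. \<iota> (fls_const (restrict d E e)) * e) \<in> R"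
      unfolding R_def by (rule imageI) (auto simp: PiE_iff extensional_def)
    ultimately show ?thesis using d by (intro bexI[of _ "\<Sum>e\<in>E. \<iota> (fls_const (d e)) * e"]) simp_all
  qed
  ultimately show ?thesis by blast
qed

lemma pow_unit:
  assumes b: "\<beta> \<in> L" "\<beta> \<noteq> 0" "v \<beta> = 0"
  shows "\<exists>N>0. \<beta> ^ N = 1 \<or> v (\<beta> ^ N - 1) > 0"
proof -
  obtain R where R: "finite R" "\<And>x. x \<in> L \<Longrightarrow> x \<noteq> 0 \<Longrightarrow> v x = 0 \<Longrightarrow> \<exists>\<rho>\<in>R. rc (x - \<rho>)"
    using finite_reps by blast
  have ex: "\<exists>\<rho>. \<rho> \<in> R \<and> rc (\<beta> ^ i - \<rho>)" for i
  proof -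
    have "\<beta> ^ i \<in> L" "\<beta> ^ i \<noteq> 0" "v (\<beta> ^ i) = 0" using b L_pow vpow by simp_all
    then show ?thesis using R(2) by blast
  qed
  define f where "f i = (SOME \<rho>. \<rho> \<in> R \<and> rc (\<beta> ^ i - \<rho>))" for i
  have f: "f i \<in> R" "rc (\<beta> ^ i - f i)" for i using someI_ex[OF ex[of i]] by (simp_all add: f_def)
  have "\<not> inj_on f {0..card R}"
  proof
    assume "inj_on f {0..card R}"
    then have "card {0..card R} \<le> card R" using card_inj_on_le[of f "{0..card R}" R] f(1) R(1) by blast
    then show False by simp
  qed
  then obtain i k where ik: "i \<noteq> k" "f i = f k" unfolding inj_on_def by blast
  have gen: "\<exists>N>0. \<beta> ^ N = 1 \<or> v (\<beta> ^ N - 1) > 0" if "i < k" "f i = f k" for i k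
  proof -
    have "rc ((\<beta> ^ k - f k) + - (\<beta> ^ i - f i))" using rc_add[OF f(2) rc_neg[OF f(2)]] .
    then have r: "rc (\<beta> ^ k - \<beta> ^ i)" using that by (simp add: algebra_simps)
    have "\<beta> ^ k = \<beta> ^ i * \<beta> ^ (k - i)" using that by (simp add: power_add[symmetric])
    then have fac: "\<beta> ^ k - \<beta> ^ i = \<beta> ^ i * (\<beta> ^ (k - i) - 1)" by (simp add: algebra_simps)
    have "\<beta> ^ (k - i) = 1 \<or> v (\<beta> ^ (k - i) - 1) > 0"
    proof (cases "\<beta> ^ (k - i) - 1 = 0")
      case True then show ?thesis by simp
    next
      case False
      have bi: "\<beta> ^ i \<noteq> 0" "v (\<beta> ^ i) = 0" using b vpow by simp_all
      then have "\<beta> ^ k - \<beta> ^ i \<noteq> 0" using fac False by simp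
      then have "v (\<beta> ^ k - \<beta> ^ i) > 0" using r by (simp add: rc_def)
      moreover have "v (\<beta> ^ k - \<beta> ^ i) = v (\<beta> ^ (k - i) - 1)" using fac vmult[OF bi(1) False] bi(2) by simp
      ultimately show ?thesis by simp
    qed
    then show ?thesis using that by (intro exI[of _ "k - i"]) simp
  qed
  show ?thesis
  proof (cases "i < k")
    case True then show ?thesis using gen ik by blast
  next
    case False then have "k < i" using ik by simp
    then show ?thesis using gen ik by metis
  qed
qed

end

context cpset begin

lemma gp:
  assumes "s \<in> goss_plane p v L"
  shows "\<And>x. x \<in> L \<Longrightarrow> x \<noteq> 0 \<Longrightarrow> s x \<noteq> 0"
    and "\<And>x y. x \<in> L \<Longrightarrow> x \<noteq> 0 \<Longrightarrow> y \<in> L \<Longrightarrow> y \<noteq> 0 \<Longrightarrow> s (x * y) = s x * s y"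
    and "\<And>z. z \<in> roots_of_unity L \<Longrightarrow> s z = 1"
    and "\<exists>y. \<forall>u\<in>one_units v L. padic_pow v u y (s u)"
  using assms unfolding goss_plane_def by auto

context
  fixes s p assumes s: "s \<in> goss_plane p v L"
begin

lemma s_nz: "x \<in> L \<Longrightarrow> x \<noteq> 0 \<Longrightarrow> s x \<noteq> 0" using gp(1)[OF s] .
lemma s_mult: "x \<in> L \<Longrightarrow> x \<noteq> 0 \<Longrightarrow> y \<in> L \<Longrightarrow> y \<noteq> 0 \<Longrightarrow> s (x * y) = s x * s y" using gp(2)[OF s] .
lemma s_1: "s 1 = 1"
proof -
  have "1 \<in> roots_of_unity L" unfolding roots_of_unity_def using L_1 by (auto intro: exI[of _ 1])
  then show ?thesis using gp(3)[OF s] by simp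
qed
lemma s_pow: "x \<in> L \<Longrightarrow> x \<noteq> 0 \<Longrightarrow> s (x ^ n) = s x ^ n"
proof (induction n)
  case 0 then show ?case using s_1 by simp
next
  case (Suc n)
  have "s (x ^ Suc n) = s (x * x ^ n)" by simp
  also have "\<dots> = s x * s (x ^ n)" using s_mult Suc.prems L_pow by simp
  finally show ?case using Suc by simp
qed
lemma s_inv: assumes "x \<in> L" "x \<noteq> 0" shows "s (inverse x) = inverse (s x)"
proof -
  have "s (x * inverse x) = s x * s (inverse x)" by (rule s_mult) (simp_all add: assms L_inv)
  then have "s x * s (inverse x) = 1" using assms s_1 by simp
  then show ?thesis using s_nz assms by (simp add: field_simps)
qed

lemma s_unit: assumes u: "u \<in> one_units v L" shows "v (s u) = 0"
proof -
  obtain y where y: "\<forall>u\<in>one_units v L. padic_pow v u y (s u)" using gp(4)[OF s] by blast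
  have uL: "u \<in> L" and u1: "u = 1 \<or> v (u - 1) > 0" using u by (auto simp: one_units_def)
  have un: "u \<noteq> 0 \<and> v u = 0"
  proof (cases "u = 1")
    case True then show ?thesis using v1 by simp
  next
    case False
    then have "u - 1 \<noteq> 0" "v (u - 1) > 0" using u1 by auto
    then have "1 + (u - 1) \<noteq> 0 \<and> v (1 + (u - 1)) = min (v 1) (v (u - 1))"
      using vdist[of 1 "u - 1"] v1 by simp
    then show ?thesis using v1 \<open>v (u - 1) > 0\<close> by simp
  qed
  have sunz: "s u \<noteq> 0" using s_nz uL un by simp
  have "vconv v (\<lambda>n. u ^ nat (y n)) (s u)" using y u by (simp add: padic_pow_def)
  then obtain n0 where n0: "\<forall>n\<ge>n0. u ^ nat (y n) = s u \<or> v (u ^ nat (y n) - s u) \<ge> 1"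
    unfolding vconv_def by blast
  define X where "X = u ^ nat (y n0)"
  have X: "X \<noteq> 0" "v X = 0" using un vpow by (simp_all add: X_def)
  have c: "X = s u \<or> v (X - s u) \<ge> 1" using n0 by (simp add: X_def)
  show ?thesis
  proof (cases "X = s u")
    case True then show ?thesis using X by simp
  next
    case False
    then have d: "X - s u \<noteq> 0" "v (X - s u) \<ge> 1" using c by auto
    have "- (X - s u) \<noteq> 0" using d(1) by simp
    have "v (- (X - s u)) = v (X - s u)" by (rule vneg[OF d(1)])
    then have "X + - (X - s u) \<noteq> 0 \<and> v (X + - (X - s u)) = min (v X) (v (- (X - s u)))"
      using vdist[of X "- (X - s u)"] X d by simp
    then show ?thesis using X d \<open>v (- (X - s u)) = v (X - s u)\<close> by simp
  qed
qed

lemma s_val0: assumes "\<beta> \<in> L" "\<beta> \<noteq> 0" "v \<beta> = 0" shows "v (s \<beta>) = 0"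
proof -
  obtain N where N: "N > 0" "\<beta> ^ N = 1 \<or> v (\<beta> ^ N - 1) > 0" using pow_unit[OF assms] by blast
  have "\<beta> ^ N \<in> one_units v L" using N L_pow assms by (simp add: one_units_def)
  then have "v (s (\<beta> ^ N)) = 0" by (rule s_unit)
  then have "of_nat N * v (s \<beta>) = 0" using s_pow assms vpow s_nz by simp
  then show ?thesis using N by simp
qed

lemma s_ratio:
  assumes x: "x \<in> L" "x \<noteq> 0" and y: "y \<in> L" "y \<noteq> 0" and e: "v (x ^ m) = v (y ^ k)"
  shows "of_nat m * v (s x) = of_nat k * v (s y)"
proof -
  define g where "g = x ^ m * inverse (y ^ k)"
  have ykn: "y ^ k \<noteq> 0" "y ^ k \<in> L" using y L_pow by simp_all
  have xmn: "x ^ m \<noteq> 0" "x ^ m \<in> L" using x L_pow by simp_all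
  have gL: "g \<in> L" "g \<noteq> 0" using xmn ykn L_inv L_mult by (simp_all add: g_def)
  have vg: "v g = 0" using e xmn ykn vmult vinv by (simp add: g_def)
  have "x ^ m = g * y ^ k" using ykn by (simp add: g_def)
  then have "s (x ^ m) = s g * s (y ^ k)" using s_mult gL ykn by simp
  then have "v (s (x ^ m)) = v (s g) + v (s (y ^ k))" using vmult s_nz gL ykn by simp
  then show ?thesis using s_val0[OF gL vg] s_pow x y vpow s_nz by simp
qed

lemma s_main: assumes a: "\<alpha> \<in> L" "\<alpha> \<noteq> 0" shows "v (s \<alpha>) = v (s (\<iota> fls_X)) * v \<alpha>"
proof -
  define t where "t = \<iota> fls_X"
  have t: "t \<in> L" "t \<noteq> 0" "v t = 1" using iota_X by (simp_all add: t_def)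
  obtain a b where ab: "quotient_of (v \<alpha>) = (a, b)" by (cases "quotient_of (v \<alpha>)") auto
  have b0: "b > 0" using quotient_of_denom_pos[OF ab] .
  have va: "v \<alpha> = of_int a / of_int b" using quotient_of_div[OF ab] .
  define bn where "bn = nat b"
  have bn: "(of_nat bn :: rat) = of_int b" using b0 by (simp add: bn_def)
  have lhs: "v (\<alpha> ^ bn) = of_int a" using vpow[OF a(2)] va bn b0 by simp
  have key: "of_int b * v (s \<alpha>) = of_int a * v (s t)"
  proof (cases "a \<ge> 0")
    case True
    have "v (t ^ nat a) = of_int a" using vpow[OF t(2)] t(3) True by simp
    then have "of_nat bn * v (s \<alpha>) = of_nat (nat a) * v (s t)" using s_ratio[OF a t(1,2)] lhs by simp
    then show ?thesis using bn True by simp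
  next
    case False
    define ti where "ti = inverse t"
    have ti: "ti \<in> L" "ti \<noteq> 0" "v ti = -1" using t L_inv vinv by (simp_all add: ti_def)
    have "v (ti ^ nat (-a)) = of_int a" using vpow[OF ti(2)] ti(3) False by simp
    then have "of_nat bn * v (s \<alpha>) = of_nat (nat (-a)) * v (s ti)" using s_ratio[OF a ti(1,2)] lhs by simp
    moreover have "v (s ti) = - v (s t)" using s_inv[OF t(1,2)] vinv s_nz t by (simp add: ti_def)
    ultimately show ?thesis using bn False by simp
  qed
  have "of_int b * (v \<alpha> * v (s t)) = of_int a * v (s t)" using va b0 by (simp add: field_simps)
  then have "of_int b * v (s \<alpha>) = of_int b * (v \<alpha> * v (s t))" using key by (simp only:)
  then show ?thesis using b0 by (simp add: t_def mult.commute)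
qed

end

end

theorem lemma2p6:
  fixes v :: "'c::field \<Rightarrow> rat" and \<iota> :: "'k::{field,finite} fls \<Rightarrow> 'c" and L :: "'c set"
  assumes "is_C_P v \<iota>"
    and "finite_ext \<iota> L"
  shows "\<exists>r :: ('c \<Rightarrow> 'c) \<Rightarrow> rat.
           (\<forall>s\<in>goss_plane CHAR('k) v L. \<forall>t\<in>goss_plane CHAR('k) v L.
              r (goss_add s t) = r s + r t) \<and>
           (\<forall>s\<in>goss_plane CHAR('k) v L. \<forall>\<alpha>\<in>L - {0}. vL v L (s \<alpha>) = r s * vL v L \<alpha>) \<and>
           (\<forall>r' :: ('c \<Rightarrow> 'c) \<Rightarrow> rat.
              ((\<forall>s\<in>goss_plane CHAR('k) v L. \<forall>t\<in>goss_plane CHAR('k) v L.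
                  r' (goss_add s t) = r' s + r' t) \<and>
               (\<forall>s\<in>goss_plane CHAR('k) v L. \<forall>\<alpha>\<in>L - {0}. vL v L (s \<alpha>) = r' s * vL v L \<alpha>))
              \<longrightarrow> (\<forall>s\<in>goss_plane CHAR('k) v L. r' s = r s))"
proof -
  interpret cpset v \<iota> L using assms by unfold_locales
  define GP where "GP = goss_plane CHAR('k) v L"
  define r where "r s = v (s (\<iota> fls_X))" for s :: "'c \<Rightarrow> 'c"
  have hom: "r (goss_add s t) = r s + r t" if "s \<in> GP" "t \<in> GP" for s t
  proof -
    have "s (\<iota> fls_X) \<noteq> 0" "t (\<iota> fls_X) \<noteq> 0"
      using s_nz[of s "CHAR('k)"] s_nz[of t "CHAR('k)"] that iota_X by (auto simp: GP_def)
    then show ?thesis by (simp add: r_def goss_add_def vmult)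
  qed
  have val: "vL v L (s \<alpha>) = r s * vL v L \<alpha>" if "s \<in> GP" "\<alpha> \<in> L - {0}" for s \<alpha>
    using s_main[of s "CHAR('k)" \<alpha>] that by (simp add: GP_def r_def vL_def)
  have uniq: "r' s = r s" if r': "\<forall>s\<in>GP. \<forall>\<alpha>\<in>L - {0}. vL v L (s \<alpha>) = r' s * vL v L \<alpha>" and sG: "s \<in> GP" for r' s
  proof -
    have tL: "\<iota> fls_X \<in> L - {0}" using iota_X by simp
    have "r' s * vL v L (\<iota> fls_X) = r s * vL v L (\<iota> fls_X)"
      using r' sG tL val[OF sG tL] by simp
    moreover have "vL v L (\<iota> fls_X) \<noteq> 0" using ram_pos iota_X by (simp add: vL_def)
    ultimately show ?thesis by simp
  qed
  show ?thesis unfolding GP_def[symmetric]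
    using hom val uniq by (intro exI[of _ r]) blast
qed

end
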